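(* Let $q$ be a prime power and suppose there exists a linear $(t_i,t_o,s,q)$-AONT with $2\le t_i\le t_o$. Then \[ s\le \frac{(t_o-1)(q^{t_i}-1)}{(t_i-1)(q-1)}.\]
   Context: A linear $(t_i,t_o,s,q)$-AONT is given by an invertible $s\times s$ matrix $M$ over $\mathbb{F}_q$ defining the map $\mathbf{x}\mapsto\mathbf{y}=\mathbf{x}M^{-1}$ on row vectors of $\mathbb{F}_q^s$, such that for every set $I$ of $t_i$ input coordinates and every set $J$ of $s-t_o$ output coordinates, the pair $((x_i)_{i\in I},(y_j)_{j\in J})$ takes every value in $\mathbb{F}_q^{t_i+s-t_o}$ equally often as $\mathbf{x}$ ranges over $\mathbb{F}_q^s$. Equivalently, $M$ is invertible and every $t_o\times t_i$ submatrix of $M$ has rank $t_i$. *)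

theory Defs
  imports "HOL-Analysis.Analysis"
begin

text \<open>Linear (t_i, t_o, s, q)-AONT over the finite field 'a (q = CARD('a)),
  with s = CARD('s). The matrix M defines x \<mapsto> y = x M^{-1} on row vectors.\<close>

definition linear_AONT :: "nat \<Rightarrow> nat \<Rightarrow> ('a::{finite,field}) ^'s::finite^'s \<Rightarrow> bool" where
  "linear_AONT ti to M \<longleftrightarrow>
     invertible M \<and> ti \<le> to \<and> to \<le> CARD('s) \<and>
     (\<forall>I J :: 's set. card I = ti \<and> card J = CARD('s) - to \<longrightarrow>
        (\<forall>a b a' b' :: 's \<Rightarrow> 'a.
           card {x :: 'a^'s. (\<forall>i\<in>I. x $ i = a i) \<and> (\<forall>j\<in>J. (x v* matrix_inv M) $ j = b j)}
         = card {x :: 'a^'s. (\<forall>i\<in>I. x $ i = a' i) \<and> (\<forall>j\<in>J. (x v* matrix_inv M) $ j = b' j)}))"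

end

theory Submission
  imports Defs "HOL-Library.FuncSet"
begin

lemma matrix_inv_left':
  fixes M :: "('a::field)^'n^'m"
  assumes "invertible M"
  shows "matrix_inv M ** M = mat 1"
proof -
  have "\<exists>A'::'a^'m^'n. M ** A' = mat 1 \<and> A' ** M = mat 1"
    using assms unfolding invertible_def by blast
  from someI_ex[OF this] show ?thesis unfolding matrix_inv_def by blast
qed

lemma card_PiE_UNIV:
  assumes "finite I"
  shows "card (PiE I (\<lambda>_. (UNIV::'a::finite set))) = CARD('a) ^ card I"
  using assms by (simp add: card_PiE)

lemma card_ker_ge:
  fixes r :: "'s \<Rightarrow> 'a::{finite,field}" and I :: "'s set"
  assumes fin: "finite I" and cI: "card I = n" and n1: "n \<ge> 1"
  shows "card {c \<in> PiE I (\<lambda>_. UNIV::'a set). (\<Sum>i\<in>I. c i * r i) = 0} \<ge> CARD('a)^(n-1)"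
proof (cases "\<exists>i0\<in>I. r i0 \<noteq> 0")
  case True
  then obtain i0 where i0: "i0 \<in> I" "r i0 \<noteq> 0" by blast
  define g where "g f = f(i0 := - (\<Sum>i\<in>I-{i0}. f i * r i) / r i0)" for f :: "'s \<Rightarrow> 'a"
  let ?S = "{c \<in> PiE I (\<lambda>_. UNIV::'a set). (\<Sum>i\<in>I. c i * r i) = 0}"
  have inj: "inj_on g (PiE (I-{i0}) (\<lambda>_. UNIV::'a set))"
  proof (rule inj_onI)
    fix f f' assume f: "f \<in> PiE (I-{i0}) (\<lambda>_. UNIV::'a set)" and f': "f' \<in> PiE (I-{i0}) (\<lambda>_. UNIV::'a set)"
      and e: "g f = g f'"
    show "f = f'"
    proof
      fix i show "f i = f' i"
      proof (cases "i = i0")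
        case True
        then have "i \<notin> I - {i0}" by simp
        then show ?thesis using f f' by (simp add: PiE_def extensional_def)
      next
        case False
        then show ?thesis using fun_cong[OF e, of i] by (simp add: g_def)
      qed
    qed
  qed
  have into: "g ` PiE (I-{i0}) (\<lambda>_. UNIV::'a set) \<subseteq> ?S"
  proof
    fix c assume "c \<in> g ` PiE (I-{i0}) (\<lambda>_. UNIV::'a set)"
    then obtain f where f: "f \<in> PiE (I-{i0}) (\<lambda>_. UNIV::'a set)" and c: "c = g f" by blast
    have "c \<in> PiE I (\<lambda>_. UNIV)" using f i0 unfolding c g_def by (auto simp: PiE_def extensional_def)
    moreover have "(\<Sum>i\<in>I. c i * r i) = c i0 * r i0 + (\<Sum>i\<in>I-{i0}. c i * r i)"
      using fin i0 by (simp add: sum.remove)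
    moreover have "(\<Sum>i\<in>I-{i0}. c i * r i) = (\<Sum>i\<in>I-{i0}. f i * r i)"
      unfolding c g_def by (intro sum.cong) auto
    moreover have "c i0 * r i0 = - (\<Sum>i\<in>I-{i0}. f i * r i)"
      unfolding c g_def using i0 by simp
    ultimately show "c \<in> ?S" by simp
  qed
  have "finite ?S" using fin by (auto intro: finite_subset[OF _ finite_PiE[of I]])
  then have "card (PiE (I-{i0}) (\<lambda>_. UNIV::'a set)) \<le> card ?S"
    using card_inj_on_le[OF inj into] by blast
  moreover have "card (PiE (I-{i0}) (\<lambda>_. UNIV::'a set)) = CARD('a)^(n-1)"
    using fin i0 cI by (simp add: card_PiE_UNIV)
  ultimately show ?thesis by simp
next
  case False
  then have "{c \<in> PiE I (\<lambda>_. UNIV::'a set). (\<Sum>i\<in>I. c i * r i) = 0} = PiE I (\<lambda>_. UNIV::'a set)"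
    by auto
  moreover have "CARD('a)^(n-1) \<le> CARD('a)^n"
    by (rule power_increasing) auto
  ultimately show ?thesis using fin cI by (simp add: card_PiE_UNIV)
qed

lemma card_filter_sum:
  assumes "finite A"
  shows "card {x\<in>A. P x} = (\<Sum>x\<in>A. if P x then 1 else 0)"
  using assms by (simp add: sum.inter_filter[symmetric])

theorem theoremT1:
  fixes M :: "('a::{finite,field}) ^'s::finite^'s" and ti to :: nat
  assumes "linear_AONT ti to M" and "2 \<le> ti" and "ti \<le> to"
  shows "real CARD('s) \<le>
           (real to - 1) * (real CARD('a) ^ ti - 1) / ((real ti - 1) * (real CARD('a) - 1))"
proof -
  have inv: "invertible M" and tos: "to \<le> CARD('s)"
    and AO: "\<And>I J :: 's set. card I = ti \<Longrightarrow> card J = CARD('s) - to \<Longrightarrow>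
        (\<forall>a b a' b' :: 's \<Rightarrow> 'a.
           card {x :: 'a^'s. (\<forall>i\<in>I. x $ i = a i) \<and> (\<forall>j\<in>J. (x v* matrix_inv M) $ j = b j)}
         = card {x :: 'a^'s. (\<forall>i\<in>I. x $ i = a' i) \<and> (\<forall>j\<in>J. (x v* matrix_inv M) $ j = b' j)})"
    using assms(1) unfolding linear_AONT_def by blast+
  have "ti \<le> card (UNIV::'s set)" using tos assms(3) by simp
  then obtain I :: "'s set" where cI: "card I = ti" and finI: "finite I"
    using obtain_subset_with_card_n by metis
  define P where "P c k \<longleftrightarrow> (\<Sum>i\<in>I. c i * M$k$i) = 0" for c :: "'s \<Rightarrow> 'a" and k
  define z :: "'s \<Rightarrow> 'a" where "z = restrict (\<lambda>_. 0) I"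
  define C where "C = PiE I (\<lambda>_. UNIV::'a set) - {z}"
  have finC: "finite C" unfolding C_def using finI by (simp add: finite_PiE)
  have zin: "z \<in> PiE I (\<lambda>_. UNIV::'a set)" unfolding z_def by simp
  have cardC: "card C = CARD('a)^ti - 1"
    unfolding C_def using zin finI cI by (simp add: card_PiE_UNIV)
  have A: "card {k. P c k} \<le> to - 1" if cC: "c \<in> C" for c
  proof (rule ccontr)
    assume "\<not> card {k. P c k} \<le> to - 1"
    then have "to \<le> card {k. P c k}" by simp
    then obtain K where KP: "K \<subseteq> {k. P c k}" and cK: "card K = to" and finK: "finite K"
      using obtain_subset_with_card_n by metis
    obtain i0 where i0: "i0 \<in> I" "c i0 \<noteq> 0"
    proof -
      have "c \<noteq> z" "c \<in> PiE I (\<lambda>_. UNIV::'a set)" using cC unfolding C_def by auto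
      moreover have "c = z" if "\<forall>i\<in>I. c i = 0"
      proof
        fix i show "c i = z i"
          using \<open>c \<in> PiE I (\<lambda>_. UNIV::'a set)\<close> that unfolding z_def
          by (cases "i \<in> I") (auto simp: PiE_def extensional_def)
      qed
      ultimately show ?thesis using that by blast
    qed
    define J where "J = UNIV - K"
    have cJ: "card J = CARD('s) - to" unfolding J_def using cK by (simp add: card_Diff_subset)
    define a' :: "'s \<Rightarrow> 'a" where "a' = (\<lambda>i. if i = i0 then 1 else 0)"
    have eq: "card {x :: 'a^'s. (\<forall>i\<in>I. x $ i = 0) \<and> (\<forall>j\<in>J. (x v* matrix_inv M) $ j = 0)}
         = card {x :: 'a^'s. (\<forall>i\<in>I. x $ i = a' i) \<and> (\<forall>j\<in>J. (x v* matrix_inv M) $ j = 0)}"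
      using AO[OF cI cJ, rule_format, of "\<lambda>_. 0" "\<lambda>_. 0" a' "\<lambda>_. 0"] by simp
    let ?S0 = "{x :: 'a^'s. (\<forall>i\<in>I. x $ i = 0) \<and> (\<forall>j\<in>J. (x v* matrix_inv M) $ j = 0)}"
    have "(0::'a^'s) \<in> ?S0"
      by simp
    then have ne: "?S0 \<noteq> {}" by blast
    have "card ?S0 \<noteq> 0"
      using card_0_eq[OF finite[of ?S0]] ne by blast
    moreover have "{x :: 'a^'s. (\<forall>i\<in>I. x $ i = a' i) \<and> (\<forall>j\<in>J. (x v* matrix_inv M) $ j = 0)} = {}"
    proof (rule ccontr)
      assume "\<not> ?thesis"
      then obtain x :: "'a^'s" where xI: "\<forall>i\<in>I. x $ i = a' i" and xJ: "\<forall>j\<in>J. (x v* matrix_inv M) $ j = 0"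
        by blast
      define y where "y = x v* matrix_inv M"
      have xy: "x = y v* M" unfolding y_def vector_matrix_mul_assoc matrix_inv_left'[OF inv] by simp
      have "(\<Sum>i\<in>I. c i * x $ i) = (\<Sum>i\<in>I. c i * (\<Sum>k\<in>UNIV. y$k * M$k$i))"
        by (subst xy) (simp add: vector_matrix_mult_def)
      also have "\<dots> = (\<Sum>k\<in>UNIV. y$k * (\<Sum>i\<in>I. c i * M$k$i))"
        unfolding sum_distrib_left
      proof (subst sum.swap)
        show "(\<Sum>k\<in>UNIV. \<Sum>i\<in>I. c i * (y $ k * M $ k $ i)) = (\<Sum>k\<in>UNIV. \<Sum>i\<in>I. y $ k * (c i * M $ k $ i))"
          by (intro sum.cong refl) (simp add: mult_ac)
      qed
      also have "\<dots> = 0"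
      proof (rule sum.neutral, rule ballI)
        fix k :: 's
        show "y$k * (\<Sum>i\<in>I. c i * M$k$i) = 0"
        proof (cases "k \<in> K")
          case True then show ?thesis using KP unfolding P_def by auto
        next
          case False then show ?thesis using xJ unfolding J_def y_def by auto
        qed
      qed
      finally have "(\<Sum>i\<in>I. c i * x $ i) = 0" .
      moreover have "(\<Sum>i\<in>I. c i * x $ i) = (\<Sum>i\<in>I. if i = i0 then c i else 0)"
        using xI unfolding a'_def by (intro sum.cong) auto
      moreover have "(\<Sum>i\<in>I. if i = i0 then c i else 0) = c i0"
        using finI i0 by (simp add: sum.delta)
      ultimately show False using i0 by simp
    qed
    ultimately show False using eq by simp
  qed
  have B: "card {c\<in>C. P c k} \<ge> CARD('a)^(ti-1) - 1" for k
  proof -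
    have "{c\<in>C. P c k} = {c \<in> PiE I (\<lambda>_. UNIV::'a set). (\<Sum>i\<in>I. c i * M$k$i) = 0} - {z}"
      unfolding C_def P_def by auto
    moreover have "z \<in> {c \<in> PiE I (\<lambda>_. UNIV::'a set). (\<Sum>i\<in>I. c i * M$k$i) = 0}"
      using zin unfolding z_def by simp
    moreover have "finite {c \<in> PiE I (\<lambda>_. UNIV::'a set). (\<Sum>i\<in>I. c i * M$k$i) = 0}"
      using finI by (auto intro: finite_subset[OF _ finite_PiE[of I]])
    ultimately have "card {c\<in>C. P c k} = card {c \<in> PiE I (\<lambda>_. UNIV::'a set). (\<Sum>i\<in>I. c i * M$k$i) = 0} - 1"
      by simp
    moreover have "card {c \<in> PiE I (\<lambda>_. UNIV::'a set). (\<Sum>i\<in>I. c i * M$k$i) = 0} \<ge> CARD('a)^(ti-1)"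
      by (rule card_ker_ge[OF finI cI]) (use assms(2) in simp)
    ultimately show ?thesis by simp
  qed
  have "CARD('s) * (CARD('a)^(ti-1) - 1) = (\<Sum>k\<in>(UNIV::'s set). CARD('a)^(ti-1) - 1)" by simp
  also have "\<dots> \<le> (\<Sum>k\<in>UNIV. card {c\<in>C. P c k})" by (rule sum_mono) (rule B)
  also have "\<dots> = (\<Sum>k\<in>UNIV. \<Sum>c\<in>C. if P c k then 1 else 0)"
    using finC by (simp add: card_filter_sum)
  also have "\<dots> = (\<Sum>c\<in>C. \<Sum>k\<in>UNIV. if P c k then 1 else 0)"
    by (rule sum.swap)
  also have "\<dots> = (\<Sum>c\<in>C. card {k. P c k})"
    using card_filter_sum[of "UNIV::'s set"] by simp
  also have "\<dots> \<le> (\<Sum>c\<in>C. to - 1)" by (rule sum_mono) (rule A)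
  also have "\<dots> = (to - 1) * (CARD('a)^ti - 1)" using cardC by simp
  finally have N: "CARD('s) * (CARD('a)^(ti-1) - 1) \<le> (to - 1) * (CARD('a)^ti - 1)" .
  define q where "q = real CARD('a)"
  have q2: "q \<ge> 2"
  proof -
    have "(0::'a) \<noteq> 1" by simp
    then have "card {0::'a, 1} = 2" by simp
    moreover have "card {0::'a, 1} \<le> CARD('a)" by (rule card_mono) auto
    ultimately show ?thesis unfolding q_def by simp
  qed
  have p1: "CARD('a)^(ti-1) \<ge> 1" "CARD('a)^ti \<ge> 1" using q2 unfolding q_def by simp_all
  have to1: "to \<ge> 1" using assms by simp
  have NR: "real CARD('s) * (q^(ti-1) - 1) \<le> (real to - 1) * (q^ti - 1)"
  proof -
    have "real (CARD('s) * (CARD('a)^(ti-1) - 1)) \<le> real ((to - 1) * (CARD('a)^ti - 1))"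
      using N by linarith
    then show ?thesis using p1 to1 unfolding q_def by (simp add: of_nat_diff)
  qed
  have Bern: "1 + real (ti - 1) * (q - 1) \<le> q^(ti-1)"
    using Bernoulli_inequality[of "q - 1" "ti - 1"] q2 by simp
  have ti1: "real (ti - 1) = real ti - 1" using assms(2) by (simp add: of_nat_diff)
  have pos: "(real ti - 1) * (q - 1) > 0" using assms(2) q2 by simp
  have "real CARD('s) * ((real ti - 1) * (q - 1)) \<le> real CARD('s) * (q^(ti-1) - 1)"
    using Bern ti1 by (intro mult_left_mono) auto
  also have "\<dots> \<le> (real to - 1) * (q^ti - 1)" by (rule NR)
  finally have "real CARD('s) * ((real ti - 1) * (q - 1)) \<le> (real to - 1) * (q^ti - 1)" .
  then show ?thesis using pos unfolding q_def[symmetric] by (simp add: pos_le_divide_eq)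
qed

end
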